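(* Assume $\kappa^\infty_{2i}\ge0$ for all $i\ge1$ and $\tilde\alpha>\tilde\alpha_{\rm s}$. Then there exist $a_\Omega,a_\Sigma>0$ such that, with $I^*_\Omega=[-a_\Omega,a_\Omega]$ and $I^*_\Sigma=[-a_\Sigma,a_\Sigma]$, for every $(\boldsymbol x,\boldsymbol y)\in\mathcal X_{I^*_\Sigma}\times\mathcal X_{I^*_\Omega}$ we have $(h^\Omega(\boldsymbol x,\boldsymbol y),h^\Sigma(\boldsymbol x,\boldsymbol y))\in\mathcal X_{I^*_\Omega}\times\mathcal X_{I^*_\Sigma}$.
   Context: $\gamma\in(0,1]$, $\alpha>0$, $\tilde\alpha=\alpha/\sqrt\gamma$. $\Lambda\ge0$ compactly supported with support supremum $b$; $\phi(z)=\mathbb E\{z/(z^2-\Lambda^2)\}$, $\bar\phi(z)=\gamma\phi(z)+(1-\gamma)/z$, $D=\phi\bar\phi$, $\tilde\alpha_{\rm s}=1/\sqrt{D(b^+)}$, $\Delta_{\rm PCA}=\frac{-2\phi(D^{-1}(1/\tilde\alpha^2))}{\tilde\alpha^2D'(D^{-1}(1/\tilde\alpha^2))}$; $\kappa^\infty_{2k}$ are the rectangular free cumulants of $\Lambda$ with ratio $\gamma$. For $\xi\in(0,1)$, arrays $\boldsymbol x=(x_{s,t})_{s,t\le0}$ indexed by non-positive integers carry the norm $\|\boldsymbol x\|_\xi=\sup_{s,t\le0}\xi^{\max(|s|,|t|)}|x_{s,t}|$, and $\mathcal X_I=\{\boldsymbol x:x_{s,t}\in I\ \forall s,t\}$.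 The limit maps are $$h^\Omega_{s,t}(\boldsymbol x,\boldsymbol y)=\gamma\sum_{j,k\ge0}\Big(\frac\gamma{\alpha^2}\Big)^{j+k}\Big(\kappa^\infty_{2(j+k+1)}\frac1{\alpha^2}(\alpha^2\Delta_{\rm PCA}+x_{s-j,t-k})+\kappa^\infty_{2(j+k+2)}\Big(\frac\gamma{\alpha^2}\Big)^2(\alpha^2\Delta_{\rm PCA}+y_{s-j,t-k})\Big),$$ $$h^\Sigma_{s,t}(\boldsymbol x,\boldsymbol y)=\sum_{j,k\ge0}\Big(\frac\gamma{\alpha^2}\Big)^{j+k}\Big(\kappa^\infty_{2(j+k+1)}\Big(\frac\gamma\alpha\Big)^2(\alpha^2\Delta_{\rm PCA}+y_{s-j,t-k})+\kappa^\infty_{2(j+k+2)}\Big(\frac\gamma{\alpha^2}\Big)^2(\alpha^2\Delta_{\rm PCA}+x_{s-j,t-k})\Big).$$ *)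

theory Defs
  imports "HOL-Probability.Probability" "HOL-Computational_Algebra.Formal_Power_Series"
begin

text \<open>The law of Lambda is a probability measure mu on the reals.\<close>

definition phi :: "real measure \<Rightarrow> real \<Rightarrow> real" where
  "phi mu z = (\<integral>x. z / (z^2 - x^2) \<partial>mu)"

definition phibar :: "real measure \<Rightarrow> real \<Rightarrow> real \<Rightarrow> real" where
  "phibar mu g z = g * phi mu z + (1 - g) / z"

definition Dfun :: "real measure \<Rightarrow> real \<Rightarrow> real \<Rightarrow> real" where
  "Dfun mu g z = phi mu z * phibar mu g z"

definition D_bplus :: "real measure \<Rightarrow> real \<Rightarrow> real \<Rightarrow> ereal" where
  "D_bplus mu g b = Lim (at_right b) (\<lambda>z. ereal (Dfun mu g z))"

text \<open>alpha_s = 1/sqrt(D(b+)), with the convention 1/sqrt(infinity) = 0.\<close>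
definition alpha_s :: "real measure \<Rightarrow> real \<Rightarrow> real \<Rightarrow> real" where
  "alpha_s mu g b = (case D_bplus mu g b of ereal d \<Rightarrow> 1 / sqrt d | _ \<Rightarrow> 0)"

definition Dinv :: "real measure \<Rightarrow> real \<Rightarrow> real \<Rightarrow> real \<Rightarrow> real" where
  "Dinv mu g b y = (THE z. b < z \<and> Dfun mu g z = y)"

definition Delta_PCA :: "real measure \<Rightarrow> real \<Rightarrow> real \<Rightarrow> real \<Rightarrow> real" where
  "Delta_PCA mu g b a =
     (let ta = a / sqrt g; z = Dinv mu g b (1 / ta^2)
      in - 2 * phi mu z / (ta^2 * deriv (Dfun mu g) z))"

text \<open>Rectangular free cumulants with ratio g (Benaych-Georges):
  with M(z) = sum_{n>=1} E[Lambda^(2n)] z^n and C(z) = sum_{n>=1} kappa_{2n} z^n,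
  C(z (g M(z) + 1)(M(z) + 1)) = M(z).  rect_cumulant mu g n is kappa_{2n}.\<close>
definition rect_moments :: "real measure \<Rightarrow> real fps" where
  "rect_moments mu = Abs_fps (\<lambda>n. if n = 0 then 0 else \<integral>x. x ^ (2 * n) \<partial>mu)"

definition rect_cumulant :: "real measure \<Rightarrow> real \<Rightarrow> nat \<Rightarrow> real" where
  "rect_cumulant mu g n =
     (let M = rect_moments mu; T = fps_X * (fps_const g * M + 1) * (M + 1)
      in fps_nth (M oo fps_inv T) n)"

text \<open>Arrays indexed by non-positive integers are functions int => int => real
  (only the values at s,t <= 0 matter).\<close>
definition inX :: "real set \<Rightarrow> (int \<Rightarrow> int \<Rightarrow> real) \<Rightarrow> bool" where
  "inX I x = (\<forall>s\<le>0. \<forall>t\<le>0. x s t \<in> I)"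

definition hOmega_term :: "real measure \<Rightarrow> real \<Rightarrow> real \<Rightarrow> real \<Rightarrow>
    (int \<Rightarrow> int \<Rightarrow> real) \<Rightarrow> (int \<Rightarrow> int \<Rightarrow> real) \<Rightarrow> int \<Rightarrow> int \<Rightarrow> nat \<times> nat \<Rightarrow> real" where
  "hOmega_term mu g a b x y s t jk = (case jk of (j, k) \<Rightarrow>
     (g / a^2) ^ (j + k) *
       (rect_cumulant mu g (j + k + 1) * (1 / a^2) *
          (a^2 * Delta_PCA mu g b a + x (s - int j) (t - int k))
        + rect_cumulant mu g (j + k + 2) * (g / a^2)^2 *
          (a^2 * Delta_PCA mu g b a + y (s - int j) (t - int k))))"

definition hSigma_term :: "real measure \<Rightarrow> real \<Rightarrow> real \<Rightarrow> real \<Rightarrow>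
    (int \<Rightarrow> int \<Rightarrow> real) \<Rightarrow> (int \<Rightarrow> int \<Rightarrow> real) \<Rightarrow> int \<Rightarrow> int \<Rightarrow> nat \<times> nat \<Rightarrow> real" where
  "hSigma_term mu g a b x y s t jk = (case jk of (j, k) \<Rightarrow>
     (g / a^2) ^ (j + k) *
       (rect_cumulant mu g (j + k + 1) * (g / a)^2 *
          (a^2 * Delta_PCA mu g b a + y (s - int j) (t - int k))
        + rect_cumulant mu g (j + k + 2) * (g / a^2)^2 *
          (a^2 * Delta_PCA mu g b a + x (s - int j) (t - int k))))"

definition hOmega :: "real measure \<Rightarrow> real \<Rightarrow> real \<Rightarrow> real \<Rightarrow>
    (int \<Rightarrow> int \<Rightarrow> real) \<Rightarrow> (int \<Rightarrow> int \<Rightarrow> real) \<Rightarrow> int \<Rightarrow> int \<Rightarrow> real" where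
  "hOmega mu g a b x y s t = g * (\<Sum>\<^sub>\<infinity>jk\<in>UNIV. hOmega_term mu g a b x y s t jk)"

definition hSigma :: "real measure \<Rightarrow> real \<Rightarrow> real \<Rightarrow> real \<Rightarrow>
    (int \<Rightarrow> int \<Rightarrow> real) \<Rightarrow> (int \<Rightarrow> int \<Rightarrow> real) \<Rightarrow> int \<Rightarrow> int \<Rightarrow> real" where
  "hSigma mu g a b x y s t = (\<Sum>\<^sub>\<infinity>jk\<in>UNIV. hSigma_term mu g a b x y s t jk)"

end

theory Submission
  imports Defs
begin

no_notation vec_nth (infixl \<open>$\<close> 90)
notation fps_nth (infixl \<open>$\<close> 75)


definition ev :: "real fps \<Rightarrow> ennreal \<Rightarrow> ennreal" where
  "ev f x = (\<Sum>n. ennreal (f $ n) * x ^ n)"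

definition nnf :: "real fps \<Rightarrow> bool" where
  "nnf f \<longleftrightarrow> (\<forall>n. 0 \<le> f $ n)"

lemma ennreal_suminf_swap:
  fixes f :: "nat \<Rightarrow> nat \<Rightarrow> ennreal"
  shows "(\<Sum>n. \<Sum>i. f i n) = (\<Sum>i. \<Sum>n. f i n)"
proof -
  have "(\<Sum>n. \<Sum>i. f i n) = (\<integral>\<^sup>+n. (\<Sum>i. f i n) \<partial>count_space UNIV)"
    by (simp add: nn_integral_count_space_nat)
  also have "\<dots> = (\<Sum>i. \<integral>\<^sup>+n. f i n \<partial>count_space UNIV)"
    by (rule nn_integral_suminf) simp
  also have "\<dots> = (\<Sum>i. \<Sum>n. f i n)"
    by (simp add: nn_integral_count_space_nat)
  finally show ?thesis .
qed

lemma ennreal_suminf_shift: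
  fixes c :: "nat \<Rightarrow> ennreal"
  shows "(\<Sum>n. if i \<le> n then c (n - i) else 0) = (\<Sum>k. c k)"
proof -
  have "(\<Sum>n. if i \<le> n then c (n - i) else 0) =
     (\<Sum>j. (\<lambda>n. if i \<le> n then c (n - i) else 0) (j + i)) + (\<Sum>j<i. (\<lambda>n. if i \<le> n then c (n - i) else 0) j)"
    by (rule suminf_offset) (rule summableI)
  then show ?thesis by simp
qed

lemma nnf_mult: "nnf f \<Longrightarrow> nnf g \<Longrightarrow> nnf (f * g)"
  unfolding nnf_def by (auto simp: fps_mult_nth intro!: sum_nonneg)

lemma nnf_add: "nnf f \<Longrightarrow> nnf g \<Longrightarrow> nnf (f + g)"
  unfolding nnf_def by auto

lemma nnf_power: "nnf f \<Longrightarrow> nnf (f ^ i)"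
  by (induction i) (auto simp: nnf_mult, simp add: nnf_def)

lemma ev_add: "nnf f \<Longrightarrow> nnf g \<Longrightarrow> ev (f + g) x = ev f x + ev g x"
  unfolding ev_def nnf_def
  by (subst suminf_add[OF summableI summableI]) (simp add: distrib_right)

lemma ev_mult:
  assumes f: "nnf f" and g: "nnf g"
  shows "ev (f * g) x = ev f x * ev g x"
proof -
  have "ev (f * g) x = (\<Sum>n. \<Sum>i. if i \<le> n then ennreal (f $ i) * x ^ i * (ennreal (g $ (n - i)) * x ^ (n - i)) else 0)"
  proof -
    have "ennreal ((f * g) $ n) * x ^ n = (\<Sum>i. if i \<le> n then ennreal (f $ i) * x ^ i * (ennreal (g $ (n - i)) * x ^ (n - i)) else 0)" for n
    proof -
      have "(\<Sum>i=0..n. ennreal (f $ i) * ennreal (g $ (n - i))) = (\<Sum>i=0..n. ennreal (f $ i * g $ (n - i)))"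
        using f g by (intro sum.cong) (auto simp: nnf_def ennreal_mult)
      also have "\<dots> = ennreal ((f * g) $ n)"
        using f g by (subst sum_ennreal) (auto simp: nnf_def fps_mult_nth)
      finally have "ennreal ((f * g) $ n) = (\<Sum>i=0..n. ennreal (f $ i) * ennreal (g $ (n - i)))" ..
      then have "ennreal ((f * g) $ n) * x ^ n = (\<Sum>i=0..n. ennreal (f $ i) * ennreal (g $ (n - i)) * x ^ n)"
        by (simp add: sum_distrib_right)
      also have "\<dots> = (\<Sum>i=0..n. ennreal (f $ i) * x ^ i * (ennreal (g $ (n - i)) * x ^ (n - i)))"
      proof (intro sum.cong refl)
        fix i assume "i \<in> {0..n}"
        then have "x ^ n = x ^ i * x ^ (n - i)" by (simp add: power_add[symmetric])
        then show "ennreal (f $ i) * ennreal (g $ (n - i)) * x ^ n = ennreal (f $ i) * x ^ i * (ennreal (g $ (n - i)) * x ^ (n - i))"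
          by (simp add: mult_ac)
      qed
      also have "\<dots> = (\<Sum>i. if i \<le> n then ennreal (f $ i) * x ^ i * (ennreal (g $ (n - i)) * x ^ (n - i)) else 0)"
        by (subst suminf_finite[of "{0..n}"]) auto
      finally show ?thesis .
    qed
    then show ?thesis unfolding ev_def by simp
  qed
  also have "\<dots> = (\<Sum>i. \<Sum>n. if i \<le> n then ennreal (f $ i) * x ^ i * (ennreal (g $ (n - i)) * x ^ (n - i)) else 0)"
    by (rule ennreal_suminf_swap)
  also have "\<dots> = (\<Sum>i. ennreal (f $ i) * x ^ i * (\<Sum>n. if i \<le> n then (ennreal (g $ (n - i)) * x ^ (n - i)) else 0))"
    by (subst ennreal_suminf_cmult[symmetric]) (simp add: if_distrib cong: if_cong)
  also have "\<dots> = (\<Sum>i. ennreal (f $ i) * x ^ i * ev g x)"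
    unfolding ev_def by (subst ennreal_suminf_shift) simp
  also have "\<dots> = ev f x * ev g x"
    unfolding ev_def by simp
  finally show ?thesis .
qed

lemma ev_one[simp]: "ev 1 x = 1"
proof -
  have "ev 1 x = (\<Sum>n\<in>{0}. ennreal ((1::real fps) $ n) * x ^ n)"
    unfolding ev_def by (rule suminf_finite) auto
  then show ?thesis by simp
qed

lemma ev_X[simp]: "ev fps_X x = x"
proof -
  have "ev fps_X x = (\<Sum>n\<in>{1}. ennreal ((fps_X::real fps) $ n) * x ^ n)"
    unfolding ev_def by (rule suminf_finite) auto
  then show ?thesis by simp
qed

lemma ev_const[simp]: "0 \<le> c \<Longrightarrow> ev (fps_const c) x = ennreal c"
proof -
  have "ev (fps_const c) x = (\<Sum>n\<in>{0}. ennreal ((fps_const c::real fps) $ n) * x ^ n)"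
    unfolding ev_def by (rule suminf_finite) auto
  then show "0 \<le> c \<Longrightarrow> ?thesis" by simp
qed

lemma ev_power: "nnf f \<Longrightarrow> ev (f ^ i) x = ev f x ^ i"
  by (induction i) (simp_all add: ev_mult nnf_power)

lemma ev_compose:
  assumes f: "nnf f" and g: "nnf g" and g0: "g $ 0 = 0"
  shows "ev (f oo g) x = ev f (ev g x)"
proof -
  have pz: "(g ^ i) $ n = 0" if "n < i" for i n
    using that startsby_zero_power_prefix[OF g0] by blast
  have gi: "0 \<le> (g ^ i) $ n" for i n using nnf_power[OF g] unfolding nnf_def by blast
  have "ennreal ((f oo g) $ n) * x ^ n = (\<Sum>i. ennreal (f $ i) * (ennreal ((g ^ i) $ n) * x ^ n))" for n
  proof -
    have "(\<Sum>i=0..n. ennreal (f $ i) * ennreal ((g ^ i) $ n)) = (\<Sum>i=0..n. ennreal (f $ i * (g ^ i) $ n))"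
      using f gi by (intro sum.cong) (auto simp: nnf_def ennreal_mult)
    also have "\<dots> = ennreal ((f oo g) $ n)"
      using f gi by (subst sum_ennreal) (auto simp: nnf_def fps_compose_nth)
    finally have "ennreal ((f oo g) $ n) = (\<Sum>i=0..n. ennreal (f $ i) * ennreal ((g ^ i) $ n))" ..
    then have "ennreal ((f oo g) $ n) * x ^ n = (\<Sum>i=0..n. ennreal (f $ i) * (ennreal ((g ^ i) $ n) * x ^ n))"
      by (simp add: sum_distrib_right mult.assoc)
    also have "\<dots> = (\<Sum>i. ennreal (f $ i) * (ennreal ((g ^ i) $ n) * x ^ n))"
      by (rule suminf_finite[symmetric]) (auto simp: pz)
    finally show ?thesis .
  qed
  then have "ev (f oo g) x = (\<Sum>n. \<Sum>i. ennreal (f $ i) * (ennreal ((g ^ i) $ n) * x ^ n))"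
    unfolding ev_def by simp
  also have "\<dots> = (\<Sum>i. \<Sum>n. ennreal (f $ i) * (ennreal ((g ^ i) $ n) * x ^ n))"
    by (rule ennreal_suminf_swap)
  also have "\<dots> = (\<Sum>i. ennreal (f $ i) * ev (g ^ i) x)"
    unfolding ev_def by simp
  also have "\<dots> = (\<Sum>i. ennreal (f $ i) * ev g x ^ i)"
    by (simp add: ev_power[OF g])
  also have "\<dots> = ev f (ev g x)"
    by (simp add: ev_def[of f])
  finally show ?thesis .
qed

lemma ev_mono: "nnf f \<Longrightarrow> x \<le> y \<Longrightarrow> ev f x \<le> ev f y"
  unfolding ev_def by (intro suminf_le summableI mult_left_mono power_mono) auto

lemma S_ge1:
  fixes m p z g :: real
  assumes m: "0 \<le> m" and p: "0 \<le> p" and g: "0 \<le> g" and z: "0 \<le> z"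
  shows "1 \<le> (1 + g * m) * (1 + m) + z * (g * p * (1 + m) + (1 + g * m) * p)"
proof -
  have S1: "1 \<le> (1 + g * m) * (1 + m)" using m g
    using mult_mono[of 1 "1+g*m" 1 "1+m"] by simp
  have S2: "0 \<le> z * (g * p * (1 + m) + (1 + g * m) * p)" using m g p z by simp
  show ?thesis using S1 S2 by linarith
qed

lemma alg:
  fixes m p z g :: real
  assumes m: "0 \<le> m" and p: "0 \<le> p" and g: "0 \<le> g" and z: "0 \<le> z"
  defines "S \<equiv> (1 + g * m) * (1 + m) + z * (g * p * (1 + m) + (1 + g * m) * p)"
  defines "u \<equiv> z * (1 + g * m) * (1 + m) * (p / S)"
  shows "0 < 1 - (u - m)" "0 < 1 - g * (u - m)" "0 \<le> u"
    "0 < (1 - g * (u - m)) * (1 - (u - m)) - g * u^2"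
proof -
  have S1: "1 \<le> (1 + g * m) * (1 + m)" using m g
    using mult_mono[of 1 "1+g*m" 1 "1+m"] by simp
  have S2: "0 \<le> z * (g * p * (1 + m) + (1 + g * m) * p)" using m g p z by simp
  have S: "1 \<le> S" unfolding S_def using S1 S2 by linarith
  then have S0: "S \<noteq> 0" by auto
  have e1: "1 - (u - m) = (1 + m)^2 * ((1 + g * m) + g * z * p) / S"
    unfolding u_def using S0 by (simp add: field_simps) (simp add: S_def algebra_simps power2_eq_square)
  have e2: "1 - g * (u - m) = (1 + g * m)^2 * ((1 + m) + z * p) / S"
    unfolding u_def using S0 by (simp add: field_simps) (simp add: S_def algebra_simps power2_eq_square)
  have e3: "(1 - g * (u - m)) * (1 - (u - m)) - g * u^2 = (1 + m)^2 * (1 + g * m)^2 / S"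
  proof -
    have "(1 - g * (u - m)) * (1 - (u - m)) - g * u^2 =
       ((1 + g * m)^2 * ((1 + m) + z * p)) * ((1 + m)^2 * ((1 + g * m) + g * z * p)) / S^2
        - g * (z * (1 + g * m) * (1 + m) * p)^2 / S^2"
      unfolding e1 e2 unfolding u_def by (simp add: power_divide power2_eq_square)
    also have "\<dots> = (1 + m)^2 * (1 + g * m)^2 * S / S^2"
      by (simp add: diff_divide_distrib[symmetric] S_def power2_eq_square algebra_simps)
    also have "\<dots> = (1 + m)^2 * (1 + g * m)^2 / S"
      using S0 by (simp add: power2_eq_square)
    finally show ?thesis .
  qed
  have gm: "0 \<le> g * m" "0 \<le> g * z * p" "0 \<le> z * p" using m p g z by simp_all
  show "0 < 1 - (u - m)" unfolding e1 using m gm S by (intro divide_pos_pos mult_pos_pos) auto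
  show "0 < 1 - g * (u - m)" unfolding e2 using m gm S by (intro divide_pos_pos mult_pos_pos) auto
  show "0 \<le> u" unfolding u_def using m p g z S by simp
  show "0 < (1 - g * (u - m)) * (1 - (u - m)) - g * u^2" unfolding e3 using m gm S by (intro divide_pos_pos mult_pos_pos) auto
qed


lemma pair_sum_eq:
  fixes h :: "nat \<Rightarrow> real"
  shows "(\<Sum>p\<in>{p::nat\<times>nat. fst p + snd p < N}. h (fst p + snd p)) = (\<Sum>n<N. real (Suc n) * h n)"
proof (induction N)
  case 0
  then show ?case by simp
next
  case (Suc N)
  have fin: "finite {p::nat\<times>nat. fst p + snd p < N}"
    by (rule finite_subset[of _ "{..<N} \<times> {..<N}"]) auto
  have eq: "{p::nat\<times>nat. fst p + snd p < Suc N} = {p. fst p + snd p < N} \<union> (\<lambda>i. (i, N - i)) ` {..N}"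
    by (auto simp: image_iff less_Suc_eq)
  have disj: "{p::nat\<times>nat. fst p + snd p < N} \<inter> (\<lambda>i. (i, N - i)) ` {..N} = {}" by auto
  have inj: "inj_on (\<lambda>i. (i, N - i)) {..N}" by (auto simp: inj_on_def)
  have "(\<Sum>p\<in>(\<lambda>i. (i, N - i)) ` {..N}. h (fst p + snd p)) = (\<Sum>i\<le>N. h N)"
    by (subst sum.reindex[OF inj]) (auto intro!: sum.cong)
  also have "\<dots> = real (Suc N) * h N" by simp
  finally have e2: "(\<Sum>p\<in>(\<lambda>i. (i, N - i)) ` {..N}. h (fst p + snd p)) = real (Suc N) * h N" .
  show ?case unfolding eq
    by (subst sum.union_disjoint[OF fin _ disj]) (simp_all add: e2 Suc.IH)
qed

lemma pair_le:
  fixes h :: "nat \<Rightarrow> real"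
  assumes h: "\<And>n. 0 \<le> h n" and s: "summable (\<lambda>n. real (Suc n) * h n)" and F: "finite F"
  shows "(\<Sum>p\<in>F. h (fst p + snd p)) \<le> (\<Sum>n. real (Suc n) * h n)"
proof -
  define N where "N = Suc (Max ((\<lambda>p. fst p + snd p) ` F))"
  have sub: "F \<subseteq> {p. fst p + snd p < N}"
  proof
    fix p assume "p \<in> F"
    then have "fst p + snd p \<le> Max ((\<lambda>p. fst p + snd p) ` F)" using F by (intro Max_ge) auto
    then show "p \<in> {p. fst p + snd p < N}" unfolding N_def by simp
  qed
  have fin: "finite {p::nat\<times>nat. fst p + snd p < N}"
    by (rule finite_subset[of _ "{..<N} \<times> {..<N}"]) auto
  have "(\<Sum>p\<in>F. h (fst p + snd p)) \<le> (\<Sum>p\<in>{p::nat\<times>nat. fst p + snd p < N}. h (fst p + snd p))"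
    by (rule sum_mono2[OF fin sub]) (simp add: h)
  also have "\<dots> = (\<Sum>n<N. real (Suc n) * h n)" by (rule pair_sum_eq)
  also have "\<dots> \<le> (\<Sum>n. real (Suc n) * h n)"
    by (rule sum_le_suminf[OF s]) (auto simp: h)
  finally show ?thesis .
qed


locale LM = prob_space mu for mu :: "real measure" + fixes b :: real
  assumes sb: "sets mu = sets borel" and ae: "AE x in mu. 0 \<le> x \<and> x \<le> b"
begin

definition mom :: "nat \<Rightarrow> real" where "mom n = (\<integral>x. x ^ (2 * n) \<partial>mu)"

lemma b_nonneg: "0 \<le> b"
proof -
  have "AE x in mu. 0 \<le> b" using ae by eventually_elim auto
  then show ?thesis by simp
qed

lemma meas: "f \<in> borel_measurable borel \<Longrightarrow> f \<in> borel_measurable mu"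
  by (subst measurable_cong_sets[OF sb refl])

lemma pow_int: "integrable mu (\<lambda>x. x ^ (2 * n))"
proof (rule integrable_const_bound)
  show "AE x in mu. norm (x ^ (2 * n)) \<le> b ^ (2 * n)"
    using ae by eventually_elim (auto simp: abs_le_iff power_mono)
  show "(\<lambda>x. x ^ (2 * n)) \<in> borel_measurable mu" by (rule meas) measurable
qed

lemma mom_nonneg: "0 \<le> mom n"
  unfolding mom_def by (rule integral_nonneg_AE) (simp add: zero_le_even_power)

lemma mom_le: "mom n \<le> b ^ (2 * n)"
proof -
  have "AE x in mu. x ^ (2 * n) \<le> b ^ (2 * n)"
    using ae by eventually_elim (auto intro: power_mono)
  then have "mom n \<le> (\<integral>x. b ^ (2 * n) \<partial>mu)"
    unfolding mom_def using pow_int[of n]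
    by (intro integral_mono_AE) auto
  also have "\<dots> = b ^ (2 * n)" by (simp add: prob_space)
  finally show ?thesis .
qed

lemma mom0: "mom 0 = 1"
  unfolding mom_def by (simp add: prob_space)

lemma M_nth: "fps_nth (rect_moments mu) n = (if n = 0 then 0 else mom n)"
  unfolding rect_moments_def mom_def by simp

lemma nnf_M: "nnf (rect_moments mu)"
  unfolding nnf_def M_nth using mom_nonneg by simp

lemma mom_summable:
  assumes "0 \<le> z" "b^2 * z < 1"
  shows "summable (\<lambda>n. mom n * z ^ n)"
proof (rule summable_comparison_test')
  show "summable (\<lambda>n. (b^2 * z) ^ n)" using assms b_nonneg by (intro summable_geometric) simp
  show "norm (mom n * z ^ n) \<le> (b^2 * z) ^ n" for n
    using mom_le[of n] mom_nonneg[of n] assms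
    by (simp add: power_mult power_mult_distrib mult_right_mono)
qed

lemma phi_eq:
  assumes "b < y"
  shows "phi mu y = (1 / y) * (\<Sum>n. mom n * (1 / y^2) ^ n)"
proof -
  have y0: "0 < y" using b_nonneg assms by simp
  define f where "f n x = (1 / y) * (x^2 / y^2) ^ n" for n x
  have ae2: "AE x in mu. (\<lambda>n. f n x) sums (y / (y^2 - x^2))"
    using ae
  proof eventually_elim
    case (elim x)
    have r: "norm (x^2 / y^2) < 1" using elim y0 assms
      by (auto simp: divide_simps power_strict_mono abs_square_less_1)
    have "(\<lambda>n. (x^2 / y^2) ^ n) sums (1 / (1 - x^2 / y^2))"
      using geometric_sums[OF r] by simp
    then have "(\<lambda>n. (1/y) * (x^2 / y^2) ^ n) sums ((1/y) * (1 / (1 - x^2 / y^2)))"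
      by (rule sums_mult)
    moreover have "(1/y) * (1 / (1 - x^2 / y^2)) = y / (y^2 - x^2)"
      using y0 r by (auto simp: field_simps power2_eq_square)
    ultimately show ?case unfolding f_def by simp
  qed
  have fint: "integrable mu (f n)" for n
  proof -
    have "f n = (\<lambda>x. ((1/y) * (1/y^2)^n) * x ^ (2 * n))"
      by (auto simp: f_def power_mult power_divide fun_eq_iff)
    moreover have "integrable mu (\<lambda>x. ((1/y) * (1/y^2)^n) * x ^ (2 * n))"
      by (rule integrable_mult_right, rule pow_int)
    ultimately show ?thesis by simp
  qed
  have fI: "(\<integral>x. f n x \<partial>mu) = (1/y) * (mom n * (1/y^2)^n)" for n
  proof -
    have "f n = (\<lambda>x. (1/y) * (1/y^2)^n * x ^ (2 * n))"
      by (auto simp: f_def power_mult power_divide fun_eq_iff)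
    then show ?thesis by (simp add: mom_def)
  qed
  have fabs: "(\<integral>x. norm (f n x) \<partial>mu) = (1/y) * (mom n * (1/y^2)^n)" for n
  proof -
    have "(\<lambda>x. norm (f n x)) = f n" using y0 by (auto simp: f_def fun_eq_iff)
    then show ?thesis using fI by simp
  qed
  have bz: "b^2 * (1/y^2) < 1" using assms b_nonneg y0
    by (auto simp: field_simps power_strict_mono)
  have summ: "summable (\<lambda>n. (\<integral>x. norm (f n x) \<partial>mu))"
    unfolding fabs by (intro summable_mult mom_summable bz) simp
  have m1: "(\<lambda>x. y / (y^2 - x^2)) \<in> borel_measurable mu" by (rule meas) measurable
  have m2: "(\<lambda>x. \<Sum>n. f n x) \<in> borel_measurable mu" unfolding f_def by (rule meas) measurable
  have aeq: "AE x in mu. y / (y^2 - x^2) = (\<Sum>n. f n x)"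
    using ae2 by eventually_elim (metis sums_unique)
  have "phi mu y = (\<integral>x. (\<Sum>n. f n x) \<partial>mu)"
    unfolding phi_def by (rule integral_cong_AE[OF m1 m2 aeq])
  also have "\<dots> = (\<Sum>n. (\<integral>x. f n x \<partial>mu))"
  proof (rule integral_suminf[OF fint _ summ])
    show "AE x in mu. summable (\<lambda>n. norm (f n x))"
      using ae2
    proof eventually_elim
      case (elim x)
      then have "summable (\<lambda>n. f n x)" by (simp add: sums_iff)
      moreover have "norm (f n x) = f n x" for n using y0 by (simp add: f_def)
      ultimately show ?case by simp
    qed
  qed
  also have "\<dots> = (1 / y) * (\<Sum>n. mom n * (1 / y^2) ^ n)"
    unfolding fI by (intro suminf_mult mom_summable bz) simp
  finally show ?thesis .
qed

end


context LM begin

abbreviation MM where "MM \<equiv> rect_moments mu"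

definition Mr :: "real \<Rightarrow> real" where "Mr z = (\<Sum>n. fps_nth MM n * z ^ n)"
definition Pr :: "real \<Rightarrow> real" where "Pr z = (\<Sum>n. fps_nth (fps_deriv MM) n * z ^ n)"

lemma M_summable:
  assumes "0 \<le> z" "b^2 * z < 1"
  shows "summable (\<lambda>n. fps_nth MM n * z ^ n)"
proof (rule summable_comparison_test'[OF mom_summable[OF assms]])
  show "norm (fps_nth MM n * z ^ n) \<le> mom n * z ^ n" for n
    using assms mom_nonneg by (simp add: M_nth)
qed

lemma Mr_nonneg: "0 \<le> Mr z" if "0 \<le> z" "b^2 * z < 1"
  unfolding Mr_def using that by (intro suminf_nonneg M_summable) (simp_all add: M_nth mom_nonneg)

lemma Mr_plus1:
  assumes "0 \<le> z" "b^2 * z < 1"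
  shows "1 + Mr z = (\<Sum>n. mom n * z ^ n)"
proof -
  have "(\<Sum>n. mom (Suc n) * z ^ Suc n) = (\<Sum>n. mom n * z ^ n) - mom 0 * z ^ 0"
    by (rule suminf_split_head[OF mom_summable[OF assms]])
  moreover have "(\<Sum>n. fps_nth MM (Suc n) * z ^ Suc n) = Mr z - fps_nth MM 0 * z ^ 0"
    unfolding Mr_def by (rule suminf_split_head[OF M_summable[OF assms]])
  ultimately show ?thesis by (simp add: M_nth mom0)
qed

lemma Mr_mono:
  assumes "0 \<le> z" "z \<le> z'" "b^2 * z' < 1"
  shows "Mr z \<le> Mr z'"
proof -
  have "b^2 * z \<le> b^2 * z'" using assms by (simp add: mult_left_mono)
  then have "b^2 * z < 1" using assms by linarith
  then show ?thesis
    unfolding Mr_def using assms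
    by (intro suminf_le M_summable) (auto simp: M_nth mom_nonneg mult_left_mono power_mono)
qed

lemma ev_M:
  assumes "0 \<le> z" "b^2 * z < 1"
  shows "ev MM (ennreal z) = ennreal (Mr z)"
proof -
  have "ev MM (ennreal z) = (\<Sum>n. ennreal (fps_nth MM n * z ^ n))"
    unfolding ev_def using assms by (simp add: M_nth mom_nonneg ennreal_mult ennreal_power)
  also have "\<dots> = ennreal (Mr z)"
    unfolding Mr_def using assms
    by (intro suminf_ennreal2 M_summable) (simp_all add: M_nth mom_nonneg)
  finally show ?thesis .
qed

lemma P_summable:
  assumes "0 \<le> z" "b^2 * z < 1"
  shows "summable (\<lambda>n. fps_nth (fps_deriv MM) n * z ^ n)"
proof -
  define K where "K = (if b = 0 then z + 1 else 1 / b^2)"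
  have K: "norm z < K" using assms b_nonneg by (auto simp: K_def field_simps)
  have "summable (\<lambda>n. diffs (\<lambda>n. (b^2) ^ n) n * z ^ n)"
  proof (rule termdiff_converges[OF K])
    fix x :: real assume "norm x < K"
    then have "norm (b^2 * x) < 1" using b_nonneg
      by (cases "b = 0") (auto simp: K_def field_simps abs_mult)
    then show "summable (\<lambda>n. (b^2) ^ n * x ^ n)"
      by (simp add: power_mult_distrib[symmetric] summable_geometric)
  qed
  then show ?thesis
  proof (rule summable_comparison_test')
    fix n :: nat
    have "fps_nth MM (Suc n) \<le> (b^2) ^ Suc n"
      using mom_le[of "Suc n"] by (simp add: M_nth power_mult power2_eq_square mult.assoc)
    then show "norm (fps_nth (fps_deriv MM) n * z ^ n) \<le> diffs (\<lambda>n. (b^2) ^ n) n * z ^ n"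
      using assms mom_nonneg[of "Suc n"]
      by (simp add: diffs_def M_nth mult_right_mono del: power_Suc)
  qed
qed

lemma Pr_nonneg: "0 \<le> Pr z" if "0 \<le> z" "b^2 * z < 1"
  unfolding Pr_def using that by (intro suminf_nonneg P_summable) (simp_all add: M_nth mom_nonneg)

lemma nnf_dM: "nnf (fps_deriv MM)"
  unfolding nnf_def by (simp add: M_nth mom_nonneg)

lemma ev_dM:
  assumes "0 \<le> z" "b^2 * z < 1"
  shows "ev (fps_deriv MM) (ennreal z) = ennreal (Pr z)"
proof -
  have "ev (fps_deriv MM) (ennreal z) = (\<Sum>n. ennreal (fps_nth (fps_deriv MM) n * z ^ n))"
    unfolding ev_def using assms nnf_dM unfolding nnf_def
    by (simp add: ennreal_mult ennreal_power)
  also have "\<dots> = ennreal (Pr z)"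
    unfolding Pr_def using assms nnf_dM unfolding nnf_def
    by (intro suminf_ennreal2 P_summable) simp_all
  finally show ?thesis .
qed

lemma Dfun_eq:
  assumes "b < y"
  shows "Dfun mu g y = (1 / y^2) * (1 + Mr (1 / y^2)) * (1 + g * Mr (1 / y^2))"
proof -
  have y0: "0 < y" using b_nonneg assms by simp
  have bz: "b^2 * (1/y^2) < 1" using assms b_nonneg y0
    by (auto simp: field_simps power_strict_mono)
  have ph: "phi mu y = (1 / y) * (1 + Mr (1 / y^2))"
    using phi_eq[OF assms] Mr_plus1[OF _ bz] by simp
  have phb: "phibar mu g y = (1 / y) * (1 + g * Mr (1 / y^2))"
    unfolding phibar_def ph using y0 by (simp add: field_simps)
  show ?thesis unfolding Dfun_def ph phb using y0 by (simp add: field_simps power2_eq_square)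
qed

end


lemma ev_sums:
  assumes "nnf f" "0 \<le> w" "ev f (ennreal w) = ennreal r" "0 \<le> r"
  shows "(\<lambda>n. f $ n * w ^ n) sums r"
proof -
  have "(\<lambda>n. ennreal (f $ n) * ennreal w ^ n) sums ev f (ennreal w)"
    unfolding ev_def by (rule summable_sums[OF summableI])
  then have "(\<lambda>n. ennreal (f $ n * w ^ n)) sums ennreal r"
    using assms unfolding nnf_def by (simp add: ennreal_mult ennreal_power)
  then show ?thesis using assms unfolding nnf_def by (subst (asm) sums_ennreal) auto
qed

context LM begin

definition TT :: "real \<Rightarrow> real fps" where
  "TT g = fps_X * (fps_const g * MM + 1) * (MM + 1)"
definition CC :: "real \<Rightarrow> real fps" where
  "CC g = MM oo fps_inv (TT g)"

lemma cum_eq: "rect_cumulant mu g n = CC g $ n"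
  unfolding rect_cumulant_def CC_def TT_def by (simp add: Let_def)

lemma M0: "MM $ 0 = 0" by (simp add: M_nth)

lemma TT0: "TT g $ 0 = 0" unfolding TT_def by (simp add: mult.assoc)
lemma TT1: "TT g $ 1 = 1" unfolding TT_def by (simp add: mult.assoc M0)

lemma CC_comp: "CC g oo TT g = MM"
proof -
  have i0: "fps_inv (TT g) $ 0 = 0" by (simp add: fps_inv_def)
  have "CC g oo TT g = MM oo (fps_inv (TT g) oo TT g)"
    unfolding CC_def by (rule fps_compose_assoc[OF TT0 i0, symmetric])
  also have "\<dots> = MM" using fps_inv[of "TT g"] TT0 TT1 by simp
  finally show ?thesis .
qed

lemma CC0: "CC g $ 0 = 0" unfolding CC_def by (simp add: M0)

lemma nnf_CC: "\<forall>i\<ge>1. 0 \<le> rect_cumulant mu g i \<Longrightarrow> nnf (CC g)"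
  unfolding nnf_def using CC0 cum_eq by (metis less_one linorder_not_le order.refl)

lemma nnf_dCC: "\<forall>i\<ge>1. 0 \<le> rect_cumulant mu g i \<Longrightarrow> nnf (fps_deriv (CC g))"
  using nnf_CC unfolding nnf_def by simp

lemma nnf_MM: "nnf MM" by (rule nnf_M)

lemma nnf_X: "nnf fps_X" unfolding nnf_def by simp
lemma nnf_one: "nnf 1" unfolding nnf_def by simp
lemma nnf_const: "0 \<le> c \<Longrightarrow> nnf (fps_const c)" unfolding nnf_def by simp

lemmas nnf_intros = nnf_add nnf_mult nnf_X nnf_one nnf_const nnf_MM nnf_dM

lemma nnf_TT: "0 \<le> g \<Longrightarrow> nnf (TT g)"
  unfolding TT_def by (intro nnf_intros)

lemma dTT: "fps_deriv (TT g) = (fps_const g * MM + 1) * (MM + 1) +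
    fps_X * ((fps_const g * fps_deriv MM) * (MM + 1) + (fps_const g * MM + 1) * fps_deriv MM)"
  unfolding TT_def by (simp add: algebra_simps)

lemma nnf_dTT: "0 \<le> g \<Longrightarrow> nnf (fps_deriv (TT g))"
  unfolding dTT by (intro nnf_intros)

lemma dMM: "fps_deriv MM = (fps_deriv (CC g) oo TT g) * fps_deriv (TT g)"
proof -
  have "fps_deriv (CC g oo TT g) = (fps_deriv (CC g) oo TT g) * fps_deriv (TT g)"
    by (rule fps_compose_deriv[OF TT0])
  then show ?thesis by (simp add: CC_comp)
qed

context
  fixes g z :: real
  assumes g: "0 \<le> g" and z: "0 \<le> z" "b^2 * z < 1"
begin

lemma ev_TT: "ev (TT g) (ennreal z) = ennreal (z * (1 + g * Mr z) * (1 + Mr z))"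
proof -
  have m: "0 \<le> Mr z" using Mr_nonneg z by simp
  have "ev (TT g) (ennreal z) = ennreal z * (ennreal g * ennreal (Mr z) + 1) * (ennreal (Mr z) + 1)"
    unfolding TT_def using g z m by (simp add: nnf_intros ev_add ev_mult ev_M)
  also have "\<dots> = ennreal (z * (1 + g * Mr z) * (1 + Mr z))"
    using g z m by (simp add: ennreal_mult ennreal_plus add.commute)
  finally show ?thesis .
qed

lemma ev_dTT: "ev (fps_deriv (TT g)) (ennreal z) =
   ennreal ((1 + g * Mr z) * (1 + Mr z) + z * (g * Pr z * (1 + Mr z) + (1 + g * Mr z) * Pr z))"
proof -
  have m: "0 \<le> Mr z" using Mr_nonneg z by simp
  have p: "0 \<le> Pr z" using Pr_nonneg z by simp
  have "ev (fps_deriv (TT g)) (ennreal z) = (ennreal g * ennreal (Mr z) + 1) * (ennreal (Mr z) + 1) +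
        ennreal z * (ennreal g * ennreal (Pr z) * (ennreal (Mr z) + 1) +
         (ennreal g * ennreal (Mr z) + 1) * ennreal (Pr z))"
    unfolding dTT using g z m p by (simp add: nnf_intros ev_add ev_mult ev_M ev_dM)
  also have "\<dots> = ennreal ((1 + g * Mr z) * (1 + Mr z) + z * (g * Pr z * (1 + Mr z) + (1 + g * Mr z) * Pr z))"
    using g z m p by (simp add: ennreal_mult ennreal_plus add.commute)
  finally show ?thesis .
qed

lemma nnf_compose: "nnf f \<Longrightarrow> nnf h \<Longrightarrow> nnf (f oo h)"
  unfolding nnf_def fps_compose_nth
  using nnf_power[of h] unfolding nnf_def by (auto intro!: sum_nonneg)

context
  assumes hk: "\<forall>i\<ge>1. 0 \<le> rect_cumulant mu g i"
begin

lemma K1: "(\<lambda>n. CC g $ n * (z * (1 + g * Mr z) * (1 + Mr z)) ^ n) sums Mr z"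
proof -
  have m: "0 \<le> Mr z" using Mr_nonneg z by simp
  have "ev (CC g) (ennreal (z * (1 + g * Mr z) * (1 + Mr z))) = ennreal (Mr z)"
    using ev_compose[OF nnf_CC[OF hk] nnf_TT[OF g] TT0, of "ennreal z"] ev_TT CC_comp ev_M[OF z]
    by simp
  then show ?thesis using m z g by (intro ev_sums nnf_CC hk) auto
qed

lemma K2: "(\<lambda>n. fps_deriv (CC g) $ n * (z * (1 + g * Mr z) * (1 + Mr z)) ^ n) sums
    (Pr z / ((1 + g * Mr z) * (1 + Mr z) + z * (g * Pr z * (1 + Mr z) + (1 + g * Mr z) * Pr z)))"
proof -
  have m: "0 \<le> Mr z" using Mr_nonneg z by simp
  have p: "0 \<le> Pr z" using Pr_nonneg z by simp
  define S where "S = (1 + g * Mr z) * (1 + Mr z) + z * (g * Pr z * (1 + Mr z) + (1 + g * Mr z) * Pr z)"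
  have S: "1 \<le> S" unfolding S_def using S_ge1[OF m p g z(1)] by simp
  define w where "w = z * (1 + g * Mr z) * (1 + Mr z)"
  have w: "0 \<le> w" unfolding w_def using m g z by simp
  have "ennreal (Pr z) = ev (fps_deriv MM) (ennreal z)" using ev_dM[OF z] by simp
  also have "\<dots> = ev (fps_deriv (CC g) oo TT g) (ennreal z) * ev (fps_deriv (TT g)) (ennreal z)"
    by (subst dMM[of g]) (intro ev_mult nnf_compose nnf_dCC hk nnf_TT nnf_dTT g)
  also have "\<dots> = ev (fps_deriv (CC g)) (ennreal w) * ennreal S"
    unfolding ev_compose[OF nnf_dCC[OF hk] nnf_TT[OF g] TT0] ev_TT ev_dTT w_def S_def ..
  finally have e: "ennreal (Pr z) = ev (fps_deriv (CC g)) (ennreal w) * ennreal S" .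
  have "ev (fps_deriv (CC g)) (ennreal w) = ennreal (Pr z / S)"
  proof (cases "ev (fps_deriv (CC g)) (ennreal w)" rule: ennreal_cases)
    case (real r)
    then have "ennreal (Pr z) = ennreal (r * S)" using e S by (simp add: ennreal_mult)
    then have "Pr z = r * S" using p S real by (simp add: ennreal_inj)
    then show ?thesis using real S by simp
  next
    case top
    then show ?thesis using e S by (simp add: ennreal_mult_top)
  qed
  then show ?thesis unfolding S_def[symmetric] w_def[symmetric]
    using w p S by (intro ev_sums nnf_dCC hk) auto
qed

end

end

end


context LM begin

lemma zy:
  assumes "b < y"
  shows "0 < 1 / y^2" "b^2 * (1 / y^2) < 1"
proof -
  have y0: "0 < y" using b_nonneg assms by simp
  show "0 < 1 / y^2" using y0 by simp
  show "b^2 * (1/y^2) < 1" using assms b_nonneg y0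
    by (auto simp: field_simps power_strict_mono)
qed

lemma Dfun_anti:
  assumes g: "0 \<le> g" and y: "b < y1" "y1 \<le> y2"
  shows "Dfun mu g y2 \<le> Dfun mu g y1"
proof -
  have y0: "0 < y1" using b_nonneg y by simp
  have y2: "b < y2" using y by simp
  have zz: "1 / y2^2 \<le> 1 / y1^2" using y0 y by (intro divide_left_mono power_mono) auto
  have mm: "Mr (1 / y2^2) \<le> Mr (1 / y1^2)"
    using zy[OF y(1)] zy[OF y2] zz by (intro Mr_mono) auto
  have m2: "0 \<le> Mr (1 / y2^2)" using zy[OF y2] by (intro Mr_nonneg) auto
  show ?thesis unfolding Dfun_eq[OF y(1)] Dfun_eq[OF y2]
    using zz mm m2 g zy[OF y2]
    by (intro mult_mono) (auto intro: mult_left_mono)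
qed

lemma Dfun_pos:
  assumes g: "0 \<le> g" and y: "b < y"
  shows "0 < Dfun mu g y"
proof -
  have m: "0 \<le> Mr (1 / y^2)" using zy[OF y] by (intro Mr_nonneg) auto
  then have "0 \<le> g * Mr (1 / y^2)" using g by simp
  then show ?thesis unfolding Dfun_eq[OF y] using zy[OF y] m
    by (intro mult_pos_pos) auto
qed

lemma exists_z:
  assumes g: "0 < g" "g \<le> 1" and a: "0 < a" and h: "a / sqrt g > alpha_s mu g b"
  shows "\<exists>z. 0 < z \<and> b^2 * z < 1 \<and> g / a^2 \<le> z * (1 + g * Mr z) * (1 + Mr z)"
proof (rule ccontr)
  assume nz: "\<not> ?thesis"
  define w0 where "w0 = g / a^2"
  have Dlt: "Dfun mu g y < w0" if "b < y" for y
  proof -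
    have "\<not> (w0 \<le> (1/y^2) * (1 + g * Mr (1/y^2)) * (1 + Mr (1/y^2)))"
      using nz zy[OF that] unfolding w0_def by blast
    then show ?thesis unfolding Dfun_eq[OF that] by (simp add: mult_ac)
  qed
  define f where "f y = ereal (Dfun mu g y)" for y
  define L where "L = (SUP y\<in>{b<..}. f y)"
  have upper: "f y \<le> L" if "b < y" for y unfolding L_def using that by (intro SUP_upper) auto
  have lim: "(f \<longlongrightarrow> L) (at_right b)"
  proof (rule order_tendstoI)
    fix l assume "l < L"
    then obtain y0 where y0: "b < y0" "l < f y0" unfolding L_def by (auto simp: less_SUP_iff)
    show "eventually (\<lambda>y. l < f y) (at_right b)"
      unfolding eventually_at_right_field
    proof (intro exI[of _ y0] conjI allI impI)
      show "b < y0" by fact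
      fix y assume "b < y" "y < y0"
      then have "f y0 \<le> f y" unfolding f_def using Dfun_anti[of g y y0] g by simp
      then show "l < f y" using y0 by simp
    qed
  next
    fix u assume "L < u"
    show "eventually (\<lambda>y. f y < u) (at_right b)"
      using eventually_at_right_less[of b]
      by eventually_elim (use upper \<open>L < u\<close> in force)
  qed
  have DL: "D_bplus mu g b = L"
    unfolding D_bplus_def f_def[symmetric] by (rule tendsto_Lim[OF _ lim]) simp
  have Lle: "L \<le> ereal w0" unfolding L_def f_def using Dlt by (intro SUP_least) (simp add: less_imp_le)
  have Lpos: "ereal (Dfun mu g (b+1)) \<le> L" using upper[of "b+1"] by (simp add: f_def)
  have D1: "0 < Dfun mu g (b+1)" using Dfun_pos g by simp
  obtain d where d: "L = ereal d" using Lle Lpos by (cases L) auto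
  have d0: "0 < d" using Lpos D1 d by simp
  have dw: "d \<le> w0" using Lle d by simp
  have "alpha_s mu g b = 1 / sqrt d" unfolding alpha_s_def DL d by simp
  also have "1 / sqrt w0 \<le> 1 / sqrt d" using d0 dw by (intro divide_left_mono real_sqrt_le_mono mult_pos_pos) auto
  moreover have "1 / sqrt w0 = a / sqrt g" unfolding w0_def using a g
    by (simp add: real_sqrt_divide)
  ultimately show False using h by simp
qed

end


lemma tb:
  fixes \<alpha> \<beta> X Y A B :: real
  assumes a: "0 \<le> \<alpha>" "0 \<le> \<beta>" "\<bar>X\<bar> \<le> A" "\<bar>Y\<bar> \<le> B"
  shows "\<bar>\<alpha> * X + \<beta> * Y\<bar> \<le> \<alpha> * A + \<beta> * B"
proof -
  have e1: "\<bar>\<alpha> * X\<bar> = \<alpha> * \<bar>X\<bar>" using a(1) by (simp add: abs_mult)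
  have e2: "\<bar>\<beta> * Y\<bar> = \<beta> * \<bar>Y\<bar>" using a(2) by (simp add: abs_mult)
  have m1: "\<alpha> * \<bar>X\<bar> \<le> \<alpha> * A" using a(1,3) by (rule mult_left_mono[rotated])
  have m2: "\<beta> * \<bar>Y\<bar> \<le> \<beta> * B" using a(2,4) by (rule mult_left_mono[rotated])
  show ?thesis using abs_triangle_ineq[of "\<alpha> * X" "\<beta> * Y"] e1 e2 m1 m2 by linarith
qed

lemma bound_lemma:
  fixes f maj :: "nat \<times> nat \<Rightarrow> real" and B :: real
  assumes fm: "\<And>p. \<bar>f p\<bar> \<le> maj p" and fs: "\<And>F. finite F \<Longrightarrow> sum maj F \<le> B"
  shows "f summable_on UNIV" "\<bar>infsum f UNIV\<bar> \<le> B"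
proof -
  have m0: "0 \<le> maj p" for p using fm[of p] by linarith
  have ms: "maj summable_on UNIV"
  proof (rule nonneg_bdd_above_summable_on)
    show "\<And>x. x \<in> UNIV \<Longrightarrow> 0 \<le> maj x" using m0 by simp
    show "bdd_above (sum maj ` {F. F \<subseteq> UNIV \<and> finite F})"
      by (rule bdd_aboveI[of _ B]) (use fs in blast)
  qed
  have nm: "(\<lambda>x. norm (maj x)) = maj" using m0 by (simp add: fun_eq_iff)
  have mas: "(\<lambda>x. norm (maj x)) summable_on UNIV" unfolding nm by (rule ms)
  have fle: "norm (f x) \<le> norm (maj x)" for x using fm[of x] m0[of x] by simp
  have fas: "(\<lambda>x. norm (f x)) summable_on UNIV"
    by (rule Infinite_Sum.abs_summable_on_comparison_test[OF mas]) (rule fle)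
  show fsum: "f summable_on UNIV" by (rule abs_summable_summable[OF fas])
  have "\<bar>infsum f UNIV\<bar> \<le> infsum (\<lambda>x. norm (f x)) UNIV"
    using norm_infsum_bound[OF fas] by simp
  also have "\<dots> \<le> infsum maj UNIV"
    by (rule infsum_mono[OF fas ms]) (use fm in simp)
  also have "\<dots> \<le> B"
    by (rule infsum_le_finite_sums[OF ms]) (use fs in blast)
  finally show "\<bar>infsum f UNIV\<bar> \<le> B" .
qed

lemma termO:
  fixes g a P Q K1 K2 :: real
  assumes g: "0 < g" and a: "0 < a"
  shows "(g / a^2) ^ n * (K1 * (1 / a^2) * P + K2 * (g / a^2)^2 * Q) =
     ((g / a^2) ^ Suc n * K1 / g) * P + ((g / a^2) ^ Suc (Suc n) * K2) * Q"
proof -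
  define W where "W = (g / a^2) ^ n"
  define v where "v = g / a^2"
  have e1: "(g / a^2) ^ Suc n * K1 / g = W * K1 * (1 / a^2)"
    unfolding W_def using g by (simp add: power_Suc)
  have e2: "(g / a^2) ^ Suc (Suc n) * K2 = W * K2 * (g / a^2)^2"
    unfolding W_def by (simp add: power_Suc power2_eq_square)
  show ?thesis unfolding e1 e2 W_def[symmetric] by (simp add: distrib_left mult.assoc)
qed

lemma termS:
  fixes g a P Q K1 K2 :: real
  assumes g: "0 < g" and a: "0 < a"
  shows "(g / a^2) ^ n * (K1 * (g / a)^2 * Q + K2 * (g / a^2)^2 * P) =
     (g * ((g / a^2) ^ Suc n * K1)) * Q + ((g / a^2) ^ Suc (Suc n) * K2) * P"
proof -
  define W where "W = (g / a^2) ^ n"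
  have e1: "g * ((g / a^2) ^ Suc n * K1) = W * K1 * (g / a)^2"
    unfolding W_def by (simp add: power_Suc power2_eq_square)
  have e2: "(g / a^2) ^ Suc (Suc n) * K2 = W * K2 * (g / a^2)^2"
    unfolding W_def by (simp add: power_Suc power2_eq_square)
  show ?thesis unfolding e1 e2 W_def[symmetric] by (simp add: distrib_left mult.assoc)
qed

lemma final:
  fixes mu :: "real measure" and g a b w1 m q :: real
  assumes g: "0 < g" "g \<le> 1" and a: "0 < a"
    and k0: "rect_cumulant mu g 0 = 0" and kpos: "\<forall>i\<ge>1. 0 \<le> rect_cumulant mu g i"
    and w1: "g / a^2 \<le> w1"
    and K1: "(\<lambda>n. rect_cumulant mu g n * w1^n) sums m"
    and K2: "(\<lambda>n. (real (Suc n) * rect_cumulant mu g (Suc n)) * w1^n) sums q"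
    and c1: "0 < 1 - (w1*q - m)" and c2: "0 < 1 - g*(w1*q - m)" and c3: "0 \<le> w1*q"
    and c4: "0 < (1 - g*(w1*q - m))*(1 - (w1*q - m)) - g*(w1*q)^2"
  shows "\<exists>aO aS. 0 < aO \<and> 0 < aS \<and>
    (\<forall>x y. inX {-aS..aS} x \<and> inX {-aO..aO} y \<longrightarrow>
       (\<forall>s\<le>0. \<forall>t\<le>0. hOmega_term mu g a b x y s t summable_on UNIV
                     \<and> hSigma_term mu g a b x y s t summable_on UNIV) \<and>
       inX {-aO..aO} (hOmega mu g a b x y) \<and> inX {-aS..aS} (hSigma mu g a b x y))"
proof -
  define \<kappa> where "\<kappa> = rect_cumulant mu g"
  define w where "w = g / a^2"
  have w: "0 < w" "w \<le> w1" using g a w1 by (simp_all add: w_def)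
  have kp: "0 \<le> \<kappa> (Suc n)" for n using kpos by (simp add: \<kappa>_def)
  define h1 where "h1 n = w ^ Suc n * \<kappa> (Suc n)" for n
  define h2 where "h2 n = w ^ Suc (Suc n) * \<kappa> (Suc (Suc n))" for n
  have h1p: "0 \<le> h1 n" for n using w kp by (simp add: h1_def)
  have h2p: "0 \<le> h2 n" for n using w kp by (simp add: h2_def)
  define uu where "uu = w1 * q"
  define aa where "aa = uu - m"
  have Su: "(\<lambda>n. real (Suc n) * \<kappa> (Suc n) * w1 ^ Suc n) sums uu"
    using sums_mult[OF K2, of w1] unfolding uu_def \<kappa>_def by (simp add: mult_ac)
  have U: "summable (\<lambda>n. real (Suc n) * h1 n)" "(\<Sum>n. real (Suc n) * h1 n) \<le> uu"
  proof -
    have le: "real (Suc n) * h1 n \<le> real (Suc n) * \<kappa> (Suc n) * w1 ^ Suc n" for n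
    proof -
      have "real (Suc n) * h1 n = w ^ Suc n * (real (Suc n) * \<kappa> (Suc n))" by (simp only: h1_def mult_ac)
      also have "\<dots> \<le> w1 ^ Suc n * (real (Suc n) * \<kappa> (Suc n))"
        using w kp[of n] by (intro mult_right_mono power_mono) auto
      also have "\<dots> = real (Suc n) * \<kappa> (Suc n) * w1 ^ Suc n" by (simp only: mult_ac)
      finally show ?thesis .
    qed
    show s: "summable (\<lambda>n. real (Suc n) * h1 n)"
      by (rule summable_comparison_test'[OF sums_summable[OF Su]]) (use le h1p in auto)
    show "(\<Sum>n. real (Suc n) * h1 n) \<le> uu"
      using suminf_le[OF le s sums_summable[OF Su]] sums_unique[OF Su] by simp
  qed
  have Sm: "(\<lambda>n. \<kappa> (Suc n) * w1 ^ Suc n) sums m"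
    using K1 k0 unfolding \<kappa>_def by (subst sums_Suc_iff) simp
  have Sd: "(\<lambda>n. real n * \<kappa> (Suc n) * w1 ^ Suc n) sums aa"
  proof -
    have "(\<lambda>n. real (Suc n) * \<kappa> (Suc n) * w1 ^ Suc n - \<kappa> (Suc n) * w1 ^ Suc n) sums (uu - m)"
      by (rule sums_diff[OF Su Sm])
    then show ?thesis unfolding aa_def by (simp add: algebra_simps)
  qed
  have Se: "(\<lambda>n. real (Suc n) * \<kappa> (Suc (Suc n)) * w1 ^ Suc (Suc n)) sums aa"
    using Sd by (subst sums_Suc_iff) simp
  have aa0: "0 \<le> aa"
    using Sd w kp by (intro sums_le[OF _ sums_zero Sd]) auto
  have A: "summable (\<lambda>n. real (Suc n) * h2 n)" "(\<Sum>n. real (Suc n) * h2 n) \<le> aa"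
  proof -
    have le: "real (Suc n) * h2 n \<le> real (Suc n) * \<kappa> (Suc (Suc n)) * w1 ^ Suc (Suc n)" for n
    proof -
      have "real (Suc n) * h2 n = w ^ Suc (Suc n) * (real (Suc n) * \<kappa> (Suc (Suc n)))" by (simp only: h2_def mult_ac)
      also have "\<dots> \<le> w1 ^ Suc (Suc n) * (real (Suc n) * \<kappa> (Suc (Suc n)))"
        using w kp[of "Suc n"] by (intro mult_right_mono power_mono) auto
      also have "\<dots> = real (Suc n) * \<kappa> (Suc (Suc n)) * w1 ^ Suc (Suc n)" by (simp only: mult_ac)
      finally show ?thesis .
    qed
    show s: "summable (\<lambda>n. real (Suc n) * h2 n)"
      by (rule summable_comparison_test'[OF sums_summable[OF Se]]) (use le h2p in auto)
    show "(\<Sum>n. real (Suc n) * h2 n) \<le> aa"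
      using suminf_le[OF le s sums_summable[OF Se]] sums_unique[OF Se] by simp
  qed
  have F1: "(\<Sum>p\<in>F. h1 (fst p + snd p)) \<le> uu" if "finite F" for F
    using pair_le[OF h1p U(1) that] U(2) by linarith
  have F2: "(\<Sum>p\<in>F. h2 (fst p + snd p)) \<le> aa" if "finite F" for F
    using pair_le[OF h2p A(1) that] A(2) by linarith
  define D' where "D' = a^2 * Delta_PCA mu g b a"
  define c where "c = \<bar>D'\<bar>"
  have c0: "0 \<le> c" by (simp add: c_def)
  define pO where "pO = uu + 1 - aa"
  define pS where "pS = g * uu + 1 - g * aa"
  define det where "det = (1 - g * aa) * (1 - aa) - g * uu^2"
  have det: "0 < det" using c4 unfolding det_def aa_def uu_def by simp
  have c1': "0 < 1 - aa" using c1 unfolding aa_def uu_def by simp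
  have c2': "0 < 1 - g * aa" using c2 unfolding aa_def uu_def by simp
  have uu0: "0 \<le> uu" using c3 unfolding uu_def by simp
  have pO: "0 < pO" using c1' uu0 by (simp add: pO_def)
  have "0 \<le> g * uu" using uu0 g by simp
  then have pS: "0 < pS" using c2' unfolding pS_def by linarith
  define S4 where "S4 = uu + g * aa + g * uu + aa"
  define tt where "tt = 1 + c * S4 / det"
  have td: "tt * det = det + c * S4" unfolding tt_def using det by (simp add: distrib_right)
  have S40: "0 \<le> S4" unfolding S4_def using uu0 aa0 g by simp
  have "0 \<le> c * S4 / det" using c0 S40 det by simp
  then have tt1: "1 \<le> tt" unfolding tt_def by linarith
  define aO where "aO = tt * pO"
  define aS where "aS = tt * pS"
  have aO: "0 < aO" unfolding aO_def using tt1 pO by simp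
  have aS: "0 < aS" unfolding aS_def using tt1 pS by simp
  have IO: "(c + aS) * uu + g * (c + aO) * aa \<le> aO"
  proof -
    have id1: "uu * pS + g * aa * pO = pO - det"
      by (simp add: pO_def pS_def det_def algebra_simps power2_eq_square)
    have e: "(c + aS) * uu + g * (c + aO) * aa = c * (uu + g * aa) + tt * (uu * pS + g * aa * pO)"
      by (simp add: aS_def aO_def algebra_simps)
    have m1: "c * (uu + g * aa) \<le> c * S4"
      using c0 uu0 aa0 g by (intro mult_left_mono) (auto simp: S4_def)
    have "tt * (pO - det) = aO - tt * det" by (simp add: aO_def right_diff_distrib)
    then show ?thesis unfolding e id1 using td m1 det by linarith
  qed
  have IS: "g * (c + aO) * uu + (c + aS) * aa \<le> aS"
  proof -
    have id2: "g * uu * pO + aa * pS = pS - det"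
      by (simp add: pO_def pS_def det_def algebra_simps power2_eq_square)
    have e: "g * (c + aO) * uu + (c + aS) * aa = c * (g * uu + aa) + tt * (g * uu * pO + aa * pS)"
      by (simp add: aS_def aO_def algebra_simps)
    have m1: "c * (g * uu + aa) \<le> c * S4"
      using c0 uu0 aa0 g by (intro mult_left_mono) (auto simp: S4_def)
    have "tt * (pS - det) = aS - tt * det" by (simp add: aS_def right_diff_distrib)
    then show ?thesis unfolding e id2 using td m1 det by linarith
  qed
  have main: "\<forall>x y. inX {-aS..aS} x \<and> inX {-aO..aO} y \<longrightarrow>
       (\<forall>s\<le>0. \<forall>t\<le>0. hOmega_term mu g a b x y s t summable_on UNIV
                     \<and> hSigma_term mu g a b x y s t summable_on UNIV) \<and>
       inX {-aO..aO} (hOmega mu g a b x y) \<and> inX {-aS..aS} (hSigma mu g a b x y)"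
  proof (intro allI impI)
    fix x y assume xy: "inX {-aS..aS} x \<and> inX {-aO..aO} y"
    have xb: "\<bar>D' + x s t\<bar> \<le> c + aS" if "s \<le> 0" "t \<le> 0" for s t
    proof -
      have "x s t \<in> {-aS..aS}" using xy that unfolding inX_def by blast
      then have "\<bar>x s t\<bar> \<le> aS" by auto
      then show ?thesis using abs_triangle_ineq[of D' "x s t"] unfolding c_def by linarith
    qed
    have yb: "\<bar>D' + y s t\<bar> \<le> c + aO" if "s \<le> 0" "t \<le> 0" for s t
    proof -
      have "y s t \<in> {-aO..aO}" using xy that unfolding inX_def by blast
      then have "\<bar>y s t\<bar> \<le> aO" by auto
      then show ?thesis using abs_triangle_ineq[of D' "y s t"] unfolding c_def by linarith
    qed
    have Om: "hOmega_term mu g a b x y s t summable_on UNIV \<and> \<bar>hOmega mu g a b x y s t\<bar> \<le> aO"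
      if st: "s \<le> 0" "t \<le> 0" for s t
    proof -
      define maj where "maj p = (c + aS) / g * h1 (fst p + snd p) + (c + aO) * h2 (fst p + snd p)" for p
      have fm: "\<bar>hOmega_term mu g a b x y s t p\<bar> \<le> maj p" for p
      proof (cases p)
        case (Pair j k)
        have "hOmega_term mu g a b x y s t p =
          (h1 (j + k) / g) * (D' + x (s - int j) (t - int k)) + h2 (j + k) * (D' + y (s - int j) (t - int k))"
          unfolding Pair hOmega_term_def h1_def h2_def w_def D'_def \<kappa>_def using termO[OF g(1) a] by simp
        also have "\<bar>\<dots>\<bar> \<le> (h1 (j + k) / g) * (c + aS) + h2 (j + k) * (c + aO)"
          using st g by (intro tb xb yb divide_nonneg_pos h1p h2p) auto
        finally show ?thesis by (simp add: maj_def Pair mult_ac)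
      qed
      have fs: "sum maj F \<le> (c + aS) / g * uu + (c + aO) * aa" if "finite F" for F
      proof -
        have "sum maj F = (c + aS) / g * (\<Sum>p\<in>F. h1 (fst p + snd p)) + (c + aO) * (\<Sum>p\<in>F. h2 (fst p + snd p))"
          by (simp add: maj_def sum.distrib sum_distrib_left)
        also have "\<dots> \<le> (c + aS) / g * uu + (c + aO) * aa"
          using F1[OF that] F2[OF that] g c0 aS aO by (intro add_mono mult_left_mono) auto
        finally show ?thesis .
      qed
      note bl = bound_lemma[OF fm fs]
      have "\<bar>hOmega mu g a b x y s t\<bar> = g * \<bar>infsum (hOmega_term mu g a b x y s t) UNIV\<bar>"
        unfolding hOmega_def using g by (simp add: abs_mult)
      also have "\<dots> \<le> g * ((c + aS) / g * uu + (c + aO) * aa)"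
        using bl(2) g by (intro mult_left_mono) auto
      also have "\<dots> = (c + aS) * uu + g * (c + aO) * aa" using g by (simp add: field_simps)
      also have "\<dots> \<le> aO" by (rule IO)
      finally show ?thesis using bl(1) by simp
    qed
    have Si: "hSigma_term mu g a b x y s t summable_on UNIV \<and> \<bar>hSigma mu g a b x y s t\<bar> \<le> aS"
      if st: "s \<le> 0" "t \<le> 0" for s t
    proof -
      define maj where "maj p = g * (c + aO) * h1 (fst p + snd p) + (c + aS) * h2 (fst p + snd p)" for p
      have fm: "\<bar>hSigma_term mu g a b x y s t p\<bar> \<le> maj p" for p
      proof (cases p)
        case (Pair j k)
        have "hSigma_term mu g a b x y s t p =
          (g * h1 (j + k)) * (D' + y (s - int j) (t - int k)) + h2 (j + k) * (D' + x (s - int j) (t - int k))"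
          unfolding Pair hSigma_term_def h1_def h2_def w_def D'_def \<kappa>_def using termS[OF g(1) a] by simp
        also have "\<bar>\<dots>\<bar> \<le> (g * h1 (j + k)) * (c + aO) + h2 (j + k) * (c + aS)"
          using st g by (intro tb xb yb mult_nonneg_nonneg h1p h2p) auto
        finally show ?thesis by (simp add: maj_def Pair mult_ac)
      qed
      have fs: "sum maj F \<le> g * (c + aO) * uu + (c + aS) * aa" if "finite F" for F
      proof -
        have "sum maj F = g * (c + aO) * (\<Sum>p\<in>F. h1 (fst p + snd p)) + (c + aS) * (\<Sum>p\<in>F. h2 (fst p + snd p))"
          by (simp add: maj_def sum.distrib sum_distrib_left)
        also have "\<dots> \<le> g * (c + aO) * uu + (c + aS) * aa"
          using F1[OF that] F2[OF that] g c0 aS aO by (intro add_mono mult_left_mono) auto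
        finally show ?thesis .
      qed
      note bl = bound_lemma[OF fm fs]
      have "\<bar>hSigma mu g a b x y s t\<bar> \<le> g * (c + aO) * uu + (c + aS) * aa"
        unfolding hSigma_def using bl(2) .
      also have "\<dots> \<le> aS" by (rule IS)
      finally show ?thesis using bl(1) by simp
    qed
    have P1: "\<forall>s\<le>0. \<forall>t\<le>0. hOmega_term mu g a b x y s t summable_on UNIV \<and> hSigma_term mu g a b x y s t summable_on UNIV"
    proof (intro allI impI conjI)
      fix s t :: int assume "s \<le> 0" "t \<le> 0"
      then show "hOmega_term mu g a b x y s t summable_on UNIV" "hSigma_term mu g a b x y s t summable_on UNIV"
        using Om Si by simp_all
    qed
    have P2: "inX {-aO..aO} (hOmega mu g a b x y)"
      unfolding inX_def
    proof (intro allI impI)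
      fix s t :: int assume "s \<le> 0" "t \<le> 0"
      then have "\<bar>hOmega mu g a b x y s t\<bar> \<le> aO" using Om by simp
      then show "hOmega mu g a b x y s t \<in> {-aO..aO}" by (simp add: abs_le_iff)
    qed
    have P3: "inX {-aS..aS} (hSigma mu g a b x y)"
      unfolding inX_def
    proof (intro allI impI)
      fix s t :: int assume "s \<le> 0" "t \<le> 0"
      then have "\<bar>hSigma mu g a b x y s t\<bar> \<le> aS" using Si by simp
      then show "hSigma mu g a b x y s t \<in> {-aS..aS}" by (simp add: abs_le_iff)
    qed
    show "(\<forall>s\<le>0. \<forall>t\<le>0. hOmega_term mu g a b x y s t summable_on UNIV
                     \<and> hSigma_term mu g a b x y s t summable_on UNIV) \<and>
       inX {-aO..aO} (hOmega mu g a b x y) \<and> inX {-aS..aS} (hSigma mu g a b x y)"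
      using P1 P2 P3 by (intro conjI)
  qed
  show ?thesis using aO aS main by (intro exI[of _ aO] exI[of _ aS] conjI)
qed


theorem mainTheorem9:
  fixes mu :: "real measure" and g a b :: real
  assumes "prob_space mu" and "sets mu = sets borel"
    and "0 < g" and "g \<le> 1" and "0 < a"
    and "AE x in mu. 0 \<le> x \<and> x \<le> b"
    and "\<forall>e>0. 0 < measure mu {b - e<..}"
    and "\<forall>i\<ge>1. 0 \<le> rect_cumulant mu g i"
    and "a / sqrt g > alpha_s mu g b"
  shows "\<exists>aO aS. 0 < aO \<and> 0 < aS \<and>
    (\<forall>x y. inX {-aS..aS} x \<and> inX {-aO..aO} y \<longrightarrow>
       (\<forall>s\<le>0. \<forall>t\<le>0. hOmega_term mu g a b x y s t summable_on UNIV
                     \<and> hSigma_term mu g a b x y s t summable_on UNIV) \<and>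
       inX {-aO..aO} (hOmega mu g a b x y) \<and> inX {-aS..aS} (hSigma mu g a b x y))"
proof -
  have L: "LM mu b" unfolding LM_def LM_axioms_def using assms by auto
  interpret LM mu b by (rule L)
  have g0: "0 \<le> g" using assms by simp
  obtain z where z: "0 < z" "b^2 * z < 1" "g / a^2 \<le> z * (1 + g * Mr z) * (1 + Mr z)"
    using exists_z[of g a] assms by auto
  have z0: "0 \<le> z" using z by simp
  have hk: "\<forall>i\<ge>1. 0 \<le> rect_cumulant mu g i" using assms by simp
  define w1 where "w1 = z * (1 + g * Mr z) * (1 + Mr z)"
  define S where "S = (1 + g * Mr z) * (1 + Mr z) + z * (g * Pr z * (1 + Mr z) + (1 + g * Mr z) * Pr z)"
  have k1: "(\<lambda>n. rect_cumulant mu g n * w1 ^ n) sums Mr z"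
    using K1[OF g0 z0 z(2) hk] unfolding w1_def by (simp add: cum_eq)
  have k2: "(\<lambda>n. (real (Suc n) * rect_cumulant mu g (Suc n)) * w1 ^ n) sums (Pr z / S)"
    using K2[OF g0 z0 z(2) hk] unfolding w1_def S_def by (simp add: cum_eq)
  have k0: "rect_cumulant mu g 0 = 0" by (simp add: cum_eq CC0)
  have m: "0 \<le> Mr z" using Mr_nonneg z0 z(2) by simp
  have p: "0 \<le> Pr z" using Pr_nonneg z0 z(2) by simp
  note al = alg[OF m p g0 z0]
  have c1: "0 < 1 - (w1 * (Pr z / S) - Mr z)" using al(1) unfolding w1_def S_def by simp
  have c2: "0 < 1 - g * (w1 * (Pr z / S) - Mr z)" using al(2) unfolding w1_def S_def by simp
  have c3: "0 \<le> w1 * (Pr z / S)" using al(3) unfolding w1_def S_def by simp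
  have c4: "0 < (1 - g * (w1 * (Pr z / S) - Mr z)) * (1 - (w1 * (Pr z / S) - Mr z)) - g * (w1 * (Pr z / S))^2"
    using al(4) unfolding w1_def S_def by simp
  show ?thesis
    by (rule final[OF _ _ _ k0 hk _ k1 k2 c1 c2 c3 c4]) (use assms z(3) w1_def in auto)
qed

end
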